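(* Let $r\geq 1$ be an integer, let $a,\mu$ be real parameters, and let $\mathbf{n}=(n_1,\dots,n_r)\in\mathbb{N}_0^r$. For $\boldsymbol{\xi}=(\xi_1,\dots,\xi_r)\in\mathbb{R}^r$, the Fourier transform of $f_r(\mathbf{x};\mathbf{n},a,\mu)$ satisfies \begin{multline*} \mathcal{F}\big(f_r(x_1,\dots,x_r;n_1,\dots,n_r,a,\mu)\big)(\xi_1,\dots,\xi_r) =\frac{2^{|\mathbf{n}^2|+2a+\frac{r-3}{2}}\left(2\left(|\mathbf{n}^2|+\mu+\frac{r-1}{2}\right)\right)_{n_1}}{n_1!}\\ \times B\left(a+\frac{|\mathbf{n}^2|+i\xi_1}{2}+\frac{r-1}{4},\ a+\frac{|\mathbf{n}^2|-i\xi_1}{2}+\frac{r-1}{4}\right)\\ \times {}_3F_2\left(\begin{matrix}-n_1,\ n_1+2\left(|\mathbf{n}^2|+\mu+\frac{r-1}{2}\right),\ a+\frac{|\mathbf{n}^2|+i\xi_1}{2}+\frac{r-1}{4}\\ |\mathbf{n}^2|+2a+\frac{r-1}{2},\ |\mathbf{n}^2|+\mu+\frac{r}{2}\end{matrix}\;\Big|\;1\right)\\ \times \mathcal{F}\big(f_{r-1}(x_2,\dots,x_r;n_2,\dots,n_r,a,\mu)\big)(\xi_2,\dots,\xi_r), \end{multline*} and also \begin{multline*} \mathcal{F}\big(f_r(x_1,\dots,x_r;n_1,\dots,n_r,a,\mu)\big)(\xi_1,\dots,\xi_r) =\frac{2^{2a-1}(2\mu)_{n_r}}{n_r!}B\left(a+\frac{i\xi_r}{2},\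 a-\frac{i\xi_r}{2}\right)\\ \times {}_3F_2\left(\begin{matrix}-n_r,\ n_r+2\mu,\ a+\frac{i\xi_r}{2}\\ 2a,\ \mu+\frac12\end{matrix}\;\Big|\;1\right)\\ \times \mathcal{F}\Big(f_{r-1}\Big(x_1,\dots,x_{r-1};n_1,\dots,n_{r-1},a+\frac{n_r}{2}+\frac14,\mu+n_r+\frac12\Big)\Big)(\xi_1,\dots,\xi_{r-1}). \end{multline*}
   Context: Pochhammer symbol: $(\alpha)_0=1$, $(\alpha)_n=\alpha(\alpha+1)\cdots(\alpha+n-1)$ for $n\ge1$. Generalized hypergeometric series: ${}_pF_q\left(\begin{matrix}a_1,\dots,a_p\\ b_1,\dots,b_q\end{matrix}\mid x\right)=\sum_{k\ge0}\frac{(a_1)_k\cdots(a_p)_k}{(b_1)_k\cdots(b_q)_k}\frac{x^k}{k!}$ (here always terminating because of a numerator $-n$). Beta function $B(p,q)=\Gamma(p)\Gamma(q)/\Gamma(p+q)$. Gegenbauer polynomials: $C_n^{(\lambda)}(x)=\frac{(2\lambda)_n}{n!}\,{}_2F_1\left(\begin{matrix}-n,\ n+2\lambda\\ \lambda+\frac12\end{matrix}\mid\frac{1-x}{2}\right)$. Notation: for $\mathbf{n}=(n_1,\dots,n_s)$, $\mathbf{n}^j=(n_j,\dots,n_s)$, $|\mathbf{n}^j|=n_j+\cdots+n_s$ for $1\le j\le s$, and $|\mathbf{n}^{s+1}|=0$. For $\boldsymbol{y}=(y_1,\dots,y_s)$, $\boldsymbol{y}_0=0$, $\boldsymbol{y}_j=(y_1,\dots,y_j)$,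 $\|\cdot\|$ the Euclidean norm. Ball polynomials in $s$ variables: $P^{\mu}_{\mathbf{n}}(\boldsymbol{y})=\prod_{j=1}^{s}(1-\|\boldsymbol{y}_{j-1}\|^2)^{n_j/2}C^{(\lambda_j)}_{n_j}\big(y_j/\sqrt{1-\|\boldsymbol{y}_{j-1}\|^2}\big)$ with $\lambda_j=\mu+|\mathbf{n}^{j+1}|+\frac{s-j}{2}$. For $s\ge1$, real $a,\mu$, $\mathbf{k}=(k_1,\dots,k_s)\in\mathbb{N}_0^s$ and real $y_1,\dots,y_s$, define $f_s(y_1,\dots,y_s;k_1,\dots,k_s,a,\mu)=\prod_{j=1}^{s}(1-\tanh^2 y_j)^{a+\frac{s-j}{4}}\,P^{\mu}_{\mathbf{k}}(\upsilon_1,\dots,\upsilon_s)$, where $\upsilon_1=\tanh y_1$ and $\upsilon_j=\tanh y_j\sqrt{(1-\tanh^2y_1)\cdots(1-\tanh^2 y_{j-1})}$ for $j\ge2$. Convention: $f_0\equiv 1$ with Fourier transform equal to $1$ (relevant only when $r=1$). Fourier transform in $s$ variables: $\mathcal{F}(f)(\xi_1,\dots,\xi_s)=\int_{\mathbb{R}^s}e^{-i(\xi_1y_1+\cdots+\xi_sy_s)}f(y_1,\dots,y_s)\,dy_1\cdots dy_s$. *)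

theory Defs
  imports "HOL-Analysis.Analysis" "HOL-Probability.Probability"
begin

text \<open>Generalized hypergeometric series pFq (as an infinite series; in the theorem it
  always terminates because of a numerator parameter -n).\<close>
definition hypergeom :: "'a::{real_normed_field,banach} list \<Rightarrow> 'a list \<Rightarrow> 'a \<Rightarrow> 'a" where
  "hypergeom as bs x =
     (\<Sum>k. (\<Prod>a\<leftarrow>as. pochhammer a k) / (\<Prod>b\<leftarrow>bs. pochhammer b k) * x ^ k / fact k)"

definition gegenbauer :: "nat \<Rightarrow> real \<Rightarrow> real \<Rightarrow> real" where
  "gegenbauer n lam x =
     pochhammer (2 * lam) n / fact n *
     hypergeom [- real n, real n + 2 * lam] [lam + 1/2] ((1 - x) / 2)"

text \<open>Ball polynomial P^mu_k(v) in s variables; k = [k_1,...,k_s] (list of length s),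
  variables v_1..v_s are v 0 .. v (s-1) (0-based).  lambda_j (0-based j) is
  mu + |k^{j+2}| + (s-1-j)/2 in 1-based paper notation.\<close>
definition ball_lambda :: "nat \<Rightarrow> real \<Rightarrow> nat list \<Rightarrow> nat \<Rightarrow> real" where
  "ball_lambda s mu k j = mu + real (\<Sum>i\<in>{Suc j..<s}. k ! i) + (real s - 1 - real j) / 2"

definition ball_poly :: "nat \<Rightarrow> real \<Rightarrow> nat list \<Rightarrow> (nat \<Rightarrow> real) \<Rightarrow> real" where
  "ball_poly s mu k v =
     (\<Prod>j<s. sqrt (1 - (\<Sum>i<j. (v i)\<^sup>2)) ^ (k ! j) *
        gegenbauer (k ! j) (ball_lambda s mu k j) (v j / sqrt (1 - (\<Sum>i<j. (v i)\<^sup>2))))"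

definition upsilon :: "(nat \<Rightarrow> real) \<Rightarrow> nat \<Rightarrow> real" where
  "upsilon y j = tanh (y j) * sqrt (\<Prod>i<j. 1 - (tanh (y i))\<^sup>2)"

definition f_fun :: "nat \<Rightarrow> nat list \<Rightarrow> real \<Rightarrow> real \<Rightarrow> (nat \<Rightarrow> real) \<Rightarrow> real" where
  "f_fun s k a mu y =
     (\<Prod>j<s. (1 - (tanh (y j))\<^sup>2) powr (a + (real s - 1 - real j) / 4)) *
     ball_poly s mu k (upsilon y)"

text \<open>Fourier transform in s variables (Lebesgue integral over R^s, realised as the
  product measure of s copies of lborel). For s = 0 this is evaluation, i.e. F(f_0) = 1.\<close>
definition fourier :: "nat \<Rightarrow> ((nat \<Rightarrow> real) \<Rightarrow> real) \<Rightarrow> (nat \<Rightarrow> real) \<Rightarrow> complex" where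
  "fourier s f \<xi> =
     (LINT y | PiM {..<s} (\<lambda>_. lborel). cis (- (\<Sum>j<s. \<xi> j * y j)) * complex_of_real (f y))"

end

theory Submission
  imports Defs
begin


lemma exp_range_real: "exp ` (UNIV::real set) = {0<..}"
proof
  show "{0<..} \<subseteq> exp ` (UNIV::real set)"
    by (auto, metis exp_ln rangeI)
qed auto

lemma Gamma_log_integral:
  fixes p :: complex
  assumes p: "Re p > 0"
  shows "integrable lborel (\<lambda>x::real. exp (p * of_real x) * of_real (exp (- exp x)))"
    and "(LINT x|lborel. exp (p * of_real x) * of_real (exp (- exp x))) = Gamma p"
proof -
  define f where "f = (\<lambda>t::real. complex_of_real t powr (p - 1) / of_real (exp t))"
  have A: "f absolutely_integrable_on exp ` UNIV \<and> integral (exp ` UNIV) f = Gamma p"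
    unfolding exp_range_real f_def
    using absolutely_integrable_Gamma_integral'[OF p] Gamma_integral_complex'[OF p]
    by (auto dest: integral_unique)
  have B: "(\<lambda>x. \<bar>exp x\<bar> *\<^sub>R f (exp x)) absolutely_integrable_on UNIV \<and>
       integral UNIV (\<lambda>x. \<bar>exp x\<bar> *\<^sub>R f (exp x)) = Gamma p"
    by (subst has_absolute_integral_change_of_variables_real[where g=exp and h=exp])
       (auto intro!: derivative_eq_intros A simp: inj_def)
  have eq: "\<bar>exp x\<bar> *\<^sub>R f (exp x) = exp (p * of_real x) * of_real (exp (- exp x))" for x
  proof -
    have "complex_of_real (exp x) powr (p - 1) = exp ((p - 1) * of_real x)"
      by (simp add: powr_def Ln_of_real)
    then show ?thesis
      by (simp add: f_def scaleR_conv_of_real exp_diff exp_minus field_simps exp_of_real)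
  qed
  from B have B': "(\<lambda>x. exp (p * of_real x) * of_real (exp (- exp x))) absolutely_integrable_on UNIV"
    "integral UNIV (\<lambda>x. exp (p * of_real x) * of_real (exp (- exp x))) = Gamma p"
    unfolding eq by auto
  have meas: "(\<lambda>x::real. exp (p * of_real x) * of_real (exp (- exp x))) \<in> borel_measurable lborel"
    by measurable
  show int: "integrable lborel (\<lambda>x::real. exp (p * of_real x) * of_real (exp (- exp x)))"
    using B'(1) meas unfolding set_integrable_def
    by (simp add: integrable_completion)
  show "(LINT x|lborel. exp (p * of_real x) * of_real (exp (- exp x))) = Gamma p"
    using B' meas set_lebesgue_integral_eq_integral(2)[OF B'(1)]
    by (simp add: set_lebesgue_integral_def integral_completion)
qed


lemma lborel_shift:
  fixes f :: "real \<Rightarrow> 'a :: {banach, second_countable_topology}"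
  shows "integrable lborel (\<lambda>x. f (x + t)) \<longleftrightarrow> integrable lborel f"
    and "(LINT x|lborel. f (x + t)) = (LINT x|lborel. f x)"
  using lborel_integrable_real_affine_iff[of 1 f t] lborel_integral_real_affine[of 1 f t]
  by (simp_all add: add.commute)

lemma exp_scaled_integral:
  fixes m c :: real
  assumes m: "m > 0" and c: "c > 0"
  shows "integrable lborel (\<lambda>y::real. exp (complex_of_real m * of_real y) * of_real (exp (- (c * exp y))))"
    and "(LINT y|lborel. exp (complex_of_real m * of_real y) * of_real (exp (- (c * exp y))))
         = of_real (c powr (-m)) * Gamma (of_real m)"
proof -
  define \<phi> where "\<phi> = (\<lambda>x::real. exp (complex_of_real m * of_real x) * of_real (exp (- exp x)))"
  have eq: "exp (complex_of_real m * of_real y) * of_real (exp (- (c * exp y)))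
      = of_real (c powr (-m)) * \<phi> (y + ln c)" for y
  proof -
    have "of_real (c powr (-m)) * exp (complex_of_real m * of_real (ln c)) = (1::complex)"
      using c by (simp add: powr_def exp_of_real[symmetric] exp_add[symmetric] del: exp_of_real)
    then show ?thesis
      using c by (simp add: \<phi>_def exp_add distrib_left mult_ac exp_of_real)
  qed
  have I: "integrable lborel \<phi>" "(LINT x|lborel. \<phi> x) = Gamma (of_real m)"
    using Gamma_log_integral[of "of_real m"] m unfolding \<phi>_def by auto
  show "integrable lborel (\<lambda>y::real. exp (complex_of_real m * of_real y) * of_real (exp (- (c * exp y))))"
    unfolding eq using I(1) lborel_shift(1)[of \<phi> "ln c"] by simp
  show "(LINT y|lborel. exp (complex_of_real m * of_real y) * of_real (exp (- (c * exp y))))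
         = of_real (c powr (-m)) * Gamma (of_real m)"
    unfolding eq using I(2) lborel_shift(2)[of \<phi> "ln c"] by simp
qed



lemma Beta_log_integral:
  fixes p :: complex and m :: real
  assumes p: "Re p > 0" and pm: "Re p < m"
  shows "integrable lborel (\<lambda>s::real. exp (p * of_real s) * of_real ((1 + exp s) powr (-m)))"
    and "(LINT s|lborel. exp (p * of_real s) * of_real ((1 + exp s) powr (-m))) = Beta p (of_real m - p)"
proof -
  define q where "q = of_real m - p"
  have q: "Re q > 0" using pm by (simp add: q_def)
  have m: "m > 0" using p pm by simp
  define \<phi> where "\<phi> = (\<lambda>z x::real. exp (z * of_real x) * complex_of_real (exp (- exp x)))"
  have Gp: "integrable lborel (\<phi> p)" "(LINT x|lborel. \<phi> p x) = Gamma p"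
    using Gamma_log_integral[OF p] unfolding \<phi>_def by auto
  have Gq: "integrable lborel (\<phi> q)" "(LINT x|lborel. \<phi> q x) = Gamma q"
    using Gamma_log_integral[OF q] unfolding \<phi>_def by auto
  define F where "F = (\<lambda>(y::real, s::real). \<phi> p (s + y) * \<phi> q y)"
  have Fmeas: "F \<in> borel_measurable (lborel \<Otimes>\<^sub>M lborel)"
    unfolding F_def \<phi>_def by measurable
  have sh: "integrable lborel (\<lambda>s. \<phi> p (s + y))" "(LINT s|lborel. \<phi> p (s + y)) = Gamma p" for y
    using lborel_shift[of "\<phi> p" y] Gp by auto
  have shn: "(LINT s|lborel. norm (\<phi> p (s + y))) = (LINT s|lborel. norm (\<phi> p s))" for y
    using lborel_shift(2)[of "\<lambda>x. norm (\<phi> p x)" y] by simp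
  have Fint: "integrable (lborel \<Otimes>\<^sub>M lborel) F"
  proof (rule lborel_pair.Fubini_integrable[OF Fmeas])
    have "(\<lambda>y. LINT s|lborel. norm (F (y, s))) = (\<lambda>y. norm (\<phi> q y) * (LINT s|lborel. norm (\<phi> p s)))"
      by (auto simp: F_def norm_mult shn)
    moreover have "integrable lborel (\<lambda>y. norm (\<phi> q y) * (LINT s|lborel. norm (\<phi> p s)))"
      using Gq(1) by (intro integrable_mult_left integrable_norm)
    ultimately show "integrable lborel (\<lambda>y. LINT s|lborel. norm (F (y, s)))" by simp
    show "AE y in lborel. integrable lborel (\<lambda>s. F (y, s))"
      using sh by (auto simp: F_def intro!: integrable_mult_left)
  qed
  have H: "integrable (lborel \<Otimes>\<^sub>M lborel) (\<lambda>(s, y). F (y, s))"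
    using lborel_pair.integrable_product_swap[OF Fint] by simp
  have Fub: "(LINT s|lborel. LINT y|lborel. F (y, s)) = (LINT y|lborel. LINT s|lborel. F (y, s))"
    using lborel_pair.Fubini_integral[of "\<lambda>y s. F (y, s)"] Fint by simp
  have rhs: "(LINT y|lborel. LINT s|lborel. F (y, s)) = Gamma p * Gamma q"
  proof -
    have "(LINT y|lborel. LINT s|lborel. F (y, s)) = (LINT y|lborel. Gamma p * \<phi> q y)"
      by (simp add: F_def sh)
    also have "\<dots> = Gamma p * Gamma q" using Gq by simp
    finally show ?thesis .
  qed
  have inner: "(LINT y|lborel. F (y, s)) =
      Gamma (of_real m) * (exp (p * of_real s) * of_real ((1 + exp s) powr (-m)))" for s
  proof -
    have c: "1 + exp s > 0" by (simp add: add_pos_pos)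
    have "F (y, s) = exp (p * of_real s) *
        (exp (complex_of_real m * of_real y) * of_real (exp (- ((1 + exp s) * exp y))))" for y
    proof -
      have "F (y, s) = exp (p * of_real s + (p + q) * of_real y) * of_real (exp (- ((1 + exp s) * exp y)))"
        by (simp add: F_def \<phi>_def exp_add[symmetric] distrib_left distrib_right exp_of_real[symmetric]
            exp_minus field_simps del: exp_of_real)
      then show ?thesis by (simp add: q_def exp_add)
    qed
    then have "(LINT y|lborel. F (y, s)) = exp (p * of_real s) *
        (LINT y|lborel. exp (complex_of_real m * of_real y) * of_real (exp (- ((1 + exp s) * exp y))))"
      by simp
    also have "\<dots> = exp (p * of_real s) * (of_real ((1 + exp s) powr (-m)) * Gamma (of_real m))"
      using exp_scaled_integral(2)[OF m c] by simp
    finally show ?thesis by (simp add: mult_ac)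
  qed
  have int2: "integrable lborel (\<lambda>s. LINT y|lborel. F (y, s))"
    using lborel_pair.integrable_fst'[OF H] by simp
  have mnp: "complex_of_real m \<notin> \<int>\<^sub>\<le>\<^sub>0"
    using m nonpos_Ints_subset_nonpos_Reals by auto
  have Gm0: "Gamma (complex_of_real m) \<noteq> 0"
    using mnp by (simp add: Gamma_eq_zero_iff)
  have int3: "integrable lborel (\<lambda>s. Gamma (of_real m) * (exp (p * of_real s) * of_real ((1 + exp s) powr (-m))))"
    using int2 unfolding inner .
  show int4: "integrable lborel (\<lambda>s::real. exp (p * of_real s) * of_real ((1 + exp s) powr (-m)))"
    using integrable_mult_right[OF int3, of "inverse (Gamma (of_real m))"] Gm0
    by (simp add: field_simps)
  have "Gamma (of_real m) * (LINT s|lborel. exp (p * of_real s) * of_real ((1 + exp s) powr (-m)))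
      = Gamma p * Gamma q"
    using Fub rhs by (simp add: inner)
  also have "\<dots> = Beta p q * Gamma (of_real m)"
    using Gamma_Gamma_Beta[of p q] mnp by (simp add: q_def)
  finally show "(LINT s|lborel. exp (p * of_real s) * of_real ((1 + exp s) powr (-m))) = Beta p (of_real m - p)"
    using Gm0 by (simp add: q_def)
qed



lemma tanh_facts:
  fixes y :: real
  defines "u \<equiv> exp (2 * y)"
  shows "1 - (tanh y)\<^sup>2 = 4 * u / (1 + u)\<^sup>2" and "(1 - tanh y) / 2 = 1 / (1 + u)"
proof -
  have u: "u > 0" by (simp add: u_def)
  have t: "tanh y = (u - 1) / (u + 1)"
  proof -
    have "exp (- 2 * y) = 1 / u" by (simp add: u_def exp_minus inverse_eq_divide)
    then have "tanh y = (1 - 1 / u) / (1 + 1 / u)" by (simp only: tanh_real_altdef)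
    also have "\<dots> = (u - 1) / (u + 1)"
    proof -
      have "u + 1 \<noteq> 0" "u \<noteq> 0" using u by auto
      then show ?thesis by (simp add: divide_simps)
    qed
    finally show ?thesis .
  qed
  show "1 - (tanh y)\<^sup>2 = 4 * u / (1 + u)\<^sup>2"
  proof -
    have "u + 1 \<noteq> 0" "1 + u \<noteq> 0" using u by auto
    then show ?thesis unfolding t by (simp add: divide_simps power2_eq_square) (simp add: algebra_simps)
  qed
  show "(1 - tanh y) / 2 = 1 / (1 + u)"
  proof -
    have "u + 1 \<noteq> 0" "1 + u \<noteq> 0" using u by auto
    then show ?thesis unfolding t by (simp add: divide_simps)
  qed
qed



lemma K_real_identity:
  fixes y \<beta> :: real and j :: nat
  shows "(1 - (tanh y)\<^sup>2) powr \<beta> * ((1 - tanh y) / 2) ^ j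
       = 4 powr \<beta> * exp (2 * \<beta> * y) * (1 + exp (2 * y)) powr (- (2 * \<beta> + real j))"
proof -
  define u where "u = exp (2 * y)"
  have u: "u > 0" by (simp add: u_def)
  have 1: "(1 - (tanh y)\<^sup>2) powr \<beta> = 4 powr \<beta> * u powr \<beta> / (1 + u) powr (2 * \<beta>)"
  proof -
    have a: "((1 + u)\<^sup>2) powr \<beta> = (1 + u) powr (2 * \<beta>)"
    proof -
      have "((1 + u)\<^sup>2) = (1 + u) powr 2" using u by (simp add: powr_numeral)
      then show ?thesis by (simp only: powr_powr)
    qed
    have b: "1 - (tanh y)\<^sup>2 = 4 * u / (1 + u)\<^sup>2" using tanh_facts(1)[of y] by (simp add: u_def)
    show ?thesis using u unfolding b
      by (simp add: powr_divide powr_mult a)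
  qed
  have 2: "((1 - tanh y) / 2) ^ j = 1 / (1 + u) powr real j"
    using u unfolding tanh_facts(2)[of y, folded u_def] by (simp add: powr_realpow power_one_over)
  have 3: "u powr \<beta> = exp (2 * \<beta> * y)" using u by (simp add: powr_def u_def)
  have 4: "(1 + u) powr (- (2 * \<beta> + real j)) = 1 / ((1 + u) powr (2 * \<beta>) * (1 + u) powr real j)"
    using u by (simp only: powr_minus powr_add inverse_mult_distrib divide_inverse)
  show ?thesis unfolding 1 2 4 3[symmetric] u_def[symmetric] by simp
qed

lemma K_integral:
  fixes \<beta> \<xi> :: real and j :: nat
  assumes \<beta>: "\<beta> > 0"
  defines "g \<equiv> \<lambda>y::real. cis (- (\<xi> * y)) * complex_of_real ((1 - (tanh y)\<^sup>2) powr \<beta> * ((1 - tanh y) / 2) ^ j)"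
  shows "integrable lborel g"
    and "integral\<^sup>L lborel g = of_real (2 powr (2 * \<beta> - 1)) *
           Beta (of_real \<beta> - \<i> * of_real \<xi> / 2) (of_real (\<beta> + real j) + \<i> * of_real \<xi> / 2)"
proof -
  define p where "p = complex_of_real \<beta> - \<i> * of_real \<xi> / 2"
  define m where "m = 2 * \<beta> + real j"
  define E where "E = (\<lambda>x::real. exp (p * of_real x) * complex_of_real ((1 + exp x) powr (- m)))"
  have pRe: "Re p > 0" "Re p < m" using \<beta> by (auto simp: p_def m_def)
  have gE: "g y = of_real (4 powr \<beta>) * E (0 + 2 * y)" for y
  proof -
    have "exp (p * of_real (2 * y)) = of_real (exp (2 * \<beta> * y)) * cis (- (\<xi> * y))"
      by (simp add: p_def cis_conv_exp exp_of_real[symmetric] exp_add[symmetric] algebra_simps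
           del: exp_of_real)
    then show ?thesis
      unfolding g_def E_def K_real_identity m_def by (simp add: mult_ac)
  qed
  have EI: "integrable lborel E" "integral\<^sup>L lborel E = Beta p (of_real m - p)"
    using Beta_log_integral[OF pRe] unfolding E_def by auto
  have E2: "integrable lborel (\<lambda>y. E (0 + 2 * y))"
    using lborel_integrable_real_affine[OF EI(1), of 2 0] by simp
  show "integrable lborel g" unfolding gE using E2 by simp
  have "integral\<^sup>L lborel E = 2 *\<^sub>R integral\<^sup>L lborel (\<lambda>y. E (0 + 2 * y))"
    using lborel_integral_real_affine[of 2 E 0] by simp
  then have "integral\<^sup>L lborel (\<lambda>y. E (0 + 2 * y)) = Beta p (of_real m - p) / 2"
    using EI(2) by (simp add: scaleR_conv_of_real)
  then have "integral\<^sup>L lborel g = of_real (4 powr \<beta>) * (Beta p (of_real m - p) / 2)"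
    unfolding gE by simp
  also have "of_real m - p = of_real (\<beta> + real j) + \<i> * of_real \<xi> / 2"
    by (simp add: m_def p_def complex_eq_iff)
  also have "of_real (4 powr \<beta>) * (Beta p (of_real (\<beta> + real j) + \<i> * of_real \<xi> / 2) / 2)
     = of_real (2 powr (2 * \<beta> - 1)) * Beta p (of_real (\<beta> + real j) + \<i> * of_real \<xi> / 2)"
  proof -
    have "(4::real) powr \<beta> = 2 * 2 powr (2 * \<beta> - 1)"
    proof -
      have "(4::real) powr \<beta> = (2 powr 2) powr \<beta>" by simp
      also have "\<dots> = 2 powr (2 * \<beta> - 1 + 1)" by (simp only: powr_powr) simp
      also have "\<dots> = 2 * 2 powr (2 * \<beta> - 1)" by (simp only: powr_add) simp
      finally show ?thesis .
    qed
    then show ?thesis by simp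
  qed
  finally show "integral\<^sup>L lborel g = of_real (2 powr (2 * \<beta> - 1)) *
           Beta (of_real \<beta> - \<i> * of_real \<xi> / 2) (of_real (\<beta> + real j) + \<i> * of_real \<xi> / 2)"
    by (simp add: p_def)
qed



lemma hypergeom_terminating:
  fixes x :: "'a::{real_normed_field,banach}"
  shows "hypergeom (- of_nat k # as) bs x =
    (\<Sum>j\<le>k. (\<Prod>a\<leftarrow>(- of_nat k # as). pochhammer a j) / (\<Prod>b\<leftarrow>bs. pochhammer b j) * x ^ j / fact j)"
  unfolding hypergeom_def
  by (rule suminf_finite) (auto simp: pochhammer_of_nat_eq_0_iff)

lemma Beta_shift:
  fixes x y :: complex
  assumes y: "\<And>i. y + of_nat i \<noteq> 0" and xy: "\<And>i. x + y + of_nat i \<noteq> 0"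
  shows "Beta x (y + of_nat j) = Beta x y * pochhammer y j / pochhammer (x + y) j"
proof (induction j)
  case 0
  then show ?case by simp
next
  case (Suc j)
  have ynp: "y + of_nat j \<notin> \<int>\<^sub>\<le>\<^sub>0"
  proof
    assume "y + of_nat j \<in> \<int>\<^sub>\<le>\<^sub>0"
    then obtain n where n: "y + of_nat j = - of_nat n" by (auto elim!: nonpos_Ints_cases')
    then have "y + of_nat j + of_nat n = 0" by simp
    then have "y + of_nat (j + n) = 0" by (simp add: add.assoc)
    with y show False by blast
  qed
  have "(x + (y + of_nat j)) * Beta x (y + of_nat j + 1) = (y + of_nat j) * Beta x (y + of_nat j)"
    by (rule Beta_plus1_right[OF ynp])
  moreover have "x + (y + of_nat j) \<noteq> 0" using xy[of j] by (simp add: add_ac)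
  moreover have "pochhammer (x + y) j \<noteq> 0"
  proof
    assume "pochhammer (x + y) j = 0"
    then obtain k where "x + y = - of_nat k" by (auto simp: pochhammer_eq_0_iff)
    then have "x + y + of_nat k = 0" by simp
    with xy show False by blast
  qed
  ultimately have "Beta x (y + of_nat j + 1) = (y + of_nat j) * Beta x (y + of_nat j) / (x + (y + of_nat j))"
    by (simp add: field_simps)
  also have "\<dots> = (y + of_nat j) * (Beta x y * pochhammer y j / pochhammer (x + y) j) / (x + (y + of_nat j))"
    using Suc by simp
  finally show ?case
    by (simp add: pochhammer_Suc add_ac)
qed



lemma gegenbauer_sum:
  "gegenbauer k l t = pochhammer (2 * l) k / fact k *
     (\<Sum>j\<le>k. pochhammer (- real k) j * pochhammer (real k + 2 * l) j / pochhammer (l + 1/2) j / fact j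
        * ((1 - t) / 2) ^ j)"
  unfolding gegenbauer_def hypergeom_terminating by (simp add: mult_ac)

lemma T_integral:
  fixes \<beta> l \<xi> :: real and k :: nat
  assumes \<beta>: "\<beta> > 0"
  defines "g \<equiv> \<lambda>t::real. cis (- (\<xi> * t)) * complex_of_real ((1 - (tanh t)\<^sup>2) powr \<beta> * gegenbauer k l (tanh t))"
  shows "integrable lborel g"
    and "integral\<^sup>L lborel g =
      complex_of_real (2 powr (2 * \<beta> - 1) * pochhammer (2 * l) k / fact k)
      * Beta (complex_of_real \<beta> + \<i> * complex_of_real \<xi> / 2) (complex_of_real \<beta> - \<i> * complex_of_real \<xi> / 2)
      * hypergeom
          [- complex_of_real (real k), complex_of_real (real k + 2 * l), complex_of_real \<beta> + \<i> * complex_of_real \<xi> / 2]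
          [complex_of_real (2 * \<beta>), complex_of_real (l + 1/2)] 1"
proof -
  define c where "c = (\<lambda>j. pochhammer (- real k) j * pochhammer (real k + 2 * l) j / pochhammer (l + 1/2) j / fact j)"
  define P where "P = pochhammer (2 * l) k / fact k"
  define K where "K = (\<lambda>j (t::real). cis (- (\<xi> * t)) * complex_of_real ((1 - (tanh t)\<^sup>2) powr \<beta> * ((1 - tanh t) / 2) ^ j))"
  have KI: "integrable lborel (K j)" "integral\<^sup>L lborel (K j) = of_real (2 powr (2 * \<beta> - 1)) *
           Beta (of_real \<beta> - \<i> * of_real \<xi> / 2) (of_real (\<beta> + real j) + \<i> * of_real \<xi> / 2)" for j
    using K_integral[OF \<beta>, of \<xi> j] unfolding K_def by auto
  have gK: "g = (\<lambda>t. \<Sum>j\<le>k. complex_of_real (P * c j) * K j t)"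
    by (rule ext) (simp add: g_def K_def gegenbauer_sum c_def P_def sum_distrib_left mult_ac)
  show "integrable lborel g" unfolding gK
    by (rule Bochner_Integration.integrable_sum, rule integrable_mult_right, rule KI(1))
  define y where "y = complex_of_real \<beta> + \<i> * complex_of_real \<xi> / 2"
  define x where "x = complex_of_real \<beta> - \<i> * complex_of_real \<xi> / 2"
  have xy: "x + y = of_real (2 * \<beta>)" by (simp add: x_def y_def)
  have shift: "of_real (\<beta> + real j) + \<i> * of_real \<xi> / 2 = y + of_nat j" for j
    by (simp add: y_def)
  have B: "Beta x (y + of_nat j) = Beta x y * pochhammer y j / pochhammer (x + y) j" for j
  proof (rule Beta_shift)
    show "y + of_nat i \<noteq> 0" for i
    proof
      assume "y + of_nat i = 0"
      then have "Re (y + of_nat i) = 0" by simp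
      with \<beta> show False by (simp add: y_def)
    qed
    show "x + y + of_nat i \<noteq> 0" for i
    proof
      assume "x + y + of_nat i = 0"
      then have "Re (x + y + of_nat i) = 0" by simp
      with \<beta> show False by (simp add: xy)
    qed
  qed
  have "integral\<^sup>L lborel g = (\<Sum>j\<le>k. complex_of_real (P * c j) * integral\<^sup>L lborel (K j))"
    unfolding gK using KI(1) by (subst Bochner_Integration.integral_sum) auto
  also have "\<dots> = (\<Sum>j\<le>k. complex_of_real (P * c j) * (of_real (2 powr (2 * \<beta> - 1)) *
           (Beta x y * pochhammer y j / pochhammer (of_real (2 * \<beta>)) j)))"
    unfolding KI(2) shift x_def[symmetric] B xy by simp
  also have "\<dots> = complex_of_real (2 powr (2 * \<beta> - 1) * P) * Beta x y *
      (\<Sum>j\<le>k. (\<Prod>a\<leftarrow>[- of_nat k, complex_of_real (real k + 2 * l), y]. pochhammer a j) /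
         (\<Prod>b\<leftarrow>[complex_of_real (2 * \<beta>), complex_of_real (l + 1/2)]. pochhammer b j) * 1 ^ j / fact j)"
    unfolding sum_distrib_left
  proof (rule sum.cong[OF refl])
    fix j assume "j \<in> {..k}"
    have e: "pochhammer (- of_nat k) j = complex_of_real (pochhammer (- real k) j)"
      by (metis of_real_minus of_real_of_nat_eq pochhammer_of_real)
    show "complex_of_real (P * c j) * (of_real (2 powr (2 * \<beta> - 1)) *
           (Beta x y * pochhammer y j / pochhammer (of_real (2 * \<beta>)) j)) =
         complex_of_real (2 powr (2 * \<beta> - 1) * P) * Beta x y *
         ((\<Prod>a\<leftarrow>[- of_nat k, complex_of_real (real k + 2 * l), y]. pochhammer a j) /
         (\<Prod>b\<leftarrow>[complex_of_real (2 * \<beta>), complex_of_real (l + 1/2)]. pochhammer b j) * 1 ^ j / fact j)"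
    proof -
      have aux: "(P'::complex) * (a1 * a2 / b2 / F) * (A * (B * Y / b1)) =
          A * P' * B * ((a1 * (a2 * Y)) / (b1 * b2) * 1 / F)" for P' a1 a2 b2 F A B Y b1
        by (simp add: divide_inverse inverse_mult_distrib mult_ac)
      have e2: "pochhammer (complex_of_real (2 * \<beta>)) j = of_real (pochhammer (2 * \<beta>) j)"
        "pochhammer (complex_of_real (real k + 2 * l)) j = of_real (pochhammer (real k + 2 * l) j)"
        "pochhammer (complex_of_real (l + 1/2)) j = of_real (pochhammer (l + 1/2) j)"
        by (simp_all only: pochhammer_of_real)
      show ?thesis
        unfolding c_def e e2 of_real_mult of_real_divide prod_list.Cons prod_list.Nil list.map
          power_one mult_1_right of_real_fact
        by (rule aux[of "of_real P", simplified mult_1_right])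
    qed
  qed
  also have "\<dots> = complex_of_real (2 powr (2 * \<beta> - 1) * P) * Beta x y *
      hypergeom [- of_nat k, complex_of_real (real k + 2 * l), y]
          [complex_of_real (2 * \<beta>), complex_of_real (l + 1/2)] 1"
    by (simp only: hypergeom_terminating)
  finally have fin: "integral\<^sup>L lborel g = complex_of_real (2 powr (2 * \<beta> - 1) * P) * Beta x y *
      hypergeom [- of_nat k, complex_of_real (real k + 2 * l), y]
          [complex_of_real (2 * \<beta>), complex_of_real (l + 1/2)] 1" .
  show "integral\<^sup>L lborel g =
      complex_of_real (2 powr (2 * \<beta> - 1) * pochhammer (2 * l) k / fact k)
      * Beta (complex_of_real \<beta> + \<i> * complex_of_real \<xi> / 2) (complex_of_real \<beta> - \<i> * complex_of_real \<xi> / 2)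
      * hypergeom
          [- complex_of_real (real k), complex_of_real (real k + 2 * l), complex_of_real \<beta> + \<i> * complex_of_real \<xi> / 2]
          [complex_of_real (2 * \<beta>), complex_of_real (l + 1/2)] 1"
  proof -
    have r1: "complex_of_real (2 powr (2 * \<beta> - 1) * P) = complex_of_real (2 powr (2 * \<beta> - 1) * pochhammer (2 * l) k / fact k)"
      by (simp add: P_def)
    have r2: "- complex_of_real (real k) = - of_nat k" by simp
    have r3: "Beta x y = Beta (complex_of_real \<beta> + \<i> * complex_of_real \<xi> / 2) (complex_of_real \<beta> - \<i> * complex_of_real \<xi> / 2)"
      unfolding x_def y_def by (rule Beta_commute)
    show ?thesis using fin unfolding r1 r2 r3 unfolding y_def .
  qed
qed



definition bexp :: "nat \<Rightarrow> nat list \<Rightarrow> real \<Rightarrow> nat \<Rightarrow> real" where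
  "bexp s k a j = a + (real s - 1 - real j) / 4 + real (\<Sum>i\<in>{Suc j..<s}. k ! i) / 2"

lemma prod_triangle_swap:
  fixes F :: "nat \<Rightarrow> nat \<Rightarrow> 'a::comm_monoid_mult"
  shows "(\<Prod>j<s. \<Prod>i<j. F i j) = (\<Prod>i<s. \<Prod>j\<in>{Suc i..<s}. F i j)"
proof (induction s)
  case 0
  then show ?case by simp
next
  case (Suc s)
  have "(\<Prod>i<Suc s. \<Prod>j\<in>{Suc i..<Suc s}. F i j) = (\<Prod>i<s. \<Prod>j\<in>{Suc i..<Suc s}. F i j)"
    by simp
  also have "\<dots> = (\<Prod>i<s. (\<Prod>j\<in>{Suc i..<s}. F i j) * F i s)"
    by (intro prod.cong refl) (simp add: prod.atLeastLessThan_Suc)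
  also have "\<dots> = (\<Prod>i<s. \<Prod>j\<in>{Suc i..<s}. F i j) * (\<Prod>i<s. F i s)"
    by (simp add: prod.distrib)
  finally show ?case using Suc by simp
qed

lemma tanh_w_pos: "1 - (tanh (x::real))\<^sup>2 > 0"
proof -
  have "\<bar>tanh x\<bar> < 1" using tanh_real_bounds[of x] by auto
  then have "(tanh x)\<^sup>2 < 1"
    by (metis abs_square_less_1)
  then show ?thesis by simp
qed

lemma upsilon_partial:
  "1 - (\<Sum>i<j. (upsilon y i)\<^sup>2) = (\<Prod>i<j. 1 - (tanh (y i))\<^sup>2)"
proof (induction j)
  case 0
  then show ?case by simp
next
  case (Suc j)
  have nn: "(\<Prod>i<j. 1 - (tanh (y i))\<^sup>2) \<ge> 0"
    using tanh_w_pos by (intro prod_nonneg) (auto intro: less_imp_le)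
  have "(upsilon y j)\<^sup>2 = (tanh (y j))\<^sup>2 * (\<Prod>i<j. 1 - (tanh (y i))\<^sup>2)"
    using nn by (simp add: upsilon_def power_mult_distrib)
  then show ?case using Suc by (simp add: algebra_simps)
qed

lemma f_fun_factor:
  "f_fun s k a mu y = (\<Prod>j<s. (1 - (tanh (y j))\<^sup>2) powr bexp s k a j *
      gegenbauer (k ! j) (ball_lambda s mu k j) (tanh (y j)))"
proof -
  define w where "w = (\<lambda>i. 1 - (tanh (y i))\<^sup>2)"
  have wpos: "w i > 0" for i unfolding w_def by (rule tanh_w_pos)
  define P where "P = (\<lambda>j. \<Prod>i<j. w i)"
  have Ppos: "P j > 0" for j unfolding P_def using wpos by (intro prod_pos) auto
  have trm: "sqrt (1 - (\<Sum>i<j. (upsilon y i)\<^sup>2)) ^ (k ! j) *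
        gegenbauer (k ! j) (ball_lambda s mu k j) (upsilon y j / sqrt (1 - (\<Sum>i<j. (upsilon y i)\<^sup>2)))
      = (\<Prod>i<j. w i powr (real (k ! j) / 2)) * gegenbauer (k ! j) (ball_lambda s mu k j) (tanh (y j))" for j
  proof -
    have 1: "1 - (\<Sum>i<j. (upsilon y i)\<^sup>2) = P j" unfolding P_def w_def by (rule upsilon_partial)
    have 2: "upsilon y j / sqrt (P j) = tanh (y j)"
    proof -
      have "upsilon y j = tanh (y j) * sqrt (P j)" by (simp add: upsilon_def P_def w_def)
      moreover have "sqrt (P j) > 0" using Ppos[of j] by simp
      ultimately show ?thesis by simp
    qed
    have 3: "sqrt (P j) ^ (k ! j) = (\<Prod>i<j. w i powr (real (k ! j) / 2))"
    proof -
      have "sqrt (P j) ^ (k ! j) = P j powr (real (k ! j) / 2)"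
        using Ppos[of j] by (simp add: sqrt_def root_powr_inverse powr_realpow[symmetric] powr_powr)
      also have "\<dots> = (\<Prod>i<j. w i powr (real (k ! j) / 2))"
        unfolding P_def by (rule prod_powr_distrib)
      finally show ?thesis .
    qed
    show ?thesis unfolding 1 2 3 ..
  qed
  have "f_fun s k a mu y = (\<Prod>j<s. w j powr (a + (real s - 1 - real j) / 4)) *
      ((\<Prod>j<s. \<Prod>i<j. w i powr (real (k ! j) / 2)) *
       (\<Prod>j<s. gegenbauer (k ! j) (ball_lambda s mu k j) (tanh (y j))))"
    unfolding f_fun_def ball_poly_def trm by (simp add: w_def prod.distrib)
  also have "(\<Prod>j<s. \<Prod>i<j. w i powr (real (k ! j) / 2)) =
      (\<Prod>i<s. w i powr (real (\<Sum>j\<in>{Suc i..<s}. k ! j) / 2))"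
  proof -
    have "(\<Prod>j<s. \<Prod>i<j. w i powr (real (k ! j) / 2)) = (\<Prod>i<s. \<Prod>j\<in>{Suc i..<s}. w i powr (real (k ! j) / 2))"
      by (rule prod_triangle_swap)
    also have "\<dots> = (\<Prod>i<s. w i powr (\<Sum>j\<in>{Suc i..<s}. real (k ! j) / 2))"
      using wpos by (intro prod.cong refl) (simp add: powr_sum less_imp_neq[symmetric])
    also have "\<dots> = (\<Prod>i<s. w i powr (real (\<Sum>j\<in>{Suc i..<s}. k ! j) / 2))"
      by (simp add: sum_divide_distrib)
    finally show ?thesis .
  qed
  finally show ?thesis
    by (simp add: prod.distrib[symmetric] powr_add[symmetric] bexp_def w_def mult_ac)
qed



definition G1d :: "real \<Rightarrow> real \<Rightarrow> nat \<Rightarrow> real \<Rightarrow> real \<Rightarrow> complex" where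
  "G1d \<beta> l k \<xi> t = cis (- (\<xi> * t)) * complex_of_real ((1 - (tanh t)\<^sup>2) powr \<beta> * gegenbauer k l (tanh t))"

lemma cis_minus_sum: "cis (- sum f A) = (\<Prod>j\<in>A. cis (- f j))"
proof (induction A rule: infinite_finite_induct)
  case (insert x F)
  have "sum f (insert x F) = f x + sum f F" using insert by simp
  then have "cis (- sum f (insert x F)) = cis (- f x + - sum f F)" by simp
  also have "\<dots> = cis (- f x) * cis (- sum f F)" by (rule cis_mult[symmetric])
  finally have "cis (- sum f (insert x F)) = cis (- f x) * cis (- sum f F)" .
  then show ?case using insert by simp
qed simp_all

lemma bexp_pos: "a > 0 \<Longrightarrow> j < s \<Longrightarrow> bexp s k a j > 0"
proof -
  assume "a > 0" "j < s"
  moreover have "real (\<Sum>i\<in>{Suc j..<s}. k ! i) / 2 \<ge> 0" by (simp add: sum_nonneg)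
  moreover have "(real s - 1 - real j) / 4 \<ge> 0" using \<open>j < s\<close> by simp
  ultimately show ?thesis unfolding bexp_def by linarith
qed

lemma fourier_prod:
  assumes a: "a > 0"
  shows "fourier s (f_fun s k a mu) \<xi> =
    (\<Prod>j<s. integral\<^sup>L lborel (G1d (bexp s k a j) (ball_lambda s mu k j) (k ! j) (\<xi> j)))"
proof -
  interpret product_sigma_finite "\<lambda>_::nat. lborel::real measure" by standard
  have eq: "cis (- (\<Sum>j<s. \<xi> j * y j)) * complex_of_real (f_fun s k a mu y) =
      (\<Prod>j<s. G1d (bexp s k a j) (ball_lambda s mu k j) (k ! j) (\<xi> j) (y j))" for y
    unfolding f_fun_factor G1d_def cis_minus_sum of_real_prod prod.distrib[symmetric] ..
  show ?thesis
    unfolding fourier_def eq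
  proof (rule product_integral_prod)
    fix j assume "j \<in> {..<s}"
    then have "bexp s k a j > 0" using a bexp_pos by auto
    then show "integrable lborel (G1d (bexp s k a j) (ball_lambda s mu k j) (k ! j) (\<xi> j))"
      unfolding G1d_def by (rule T_integral(1))
  qed simp
qed



theorem theorem3p1:
  fixes r :: nat and a mu :: real and n :: "nat list" and \<xi> :: "nat \<Rightarrow> real"
  assumes "r \<ge> 1" and "length n = r" and "a > 0" and "mu > - 1/2"
  shows "(fourier r (f_fun r n a mu) \<xi> =
      complex_of_real (2 powr (real (sum_list (tl n)) + 2 * a + (real r - 3) / 2) *
          pochhammer (2 * (real (sum_list (tl n)) + mu + (real r - 1) / 2)) (hd n) / fact (hd n))
      * Beta (complex_of_real (a + real (sum_list (tl n)) / 2 + (real r - 1) / 4) + \<i> * complex_of_real (\<xi> 0) / 2)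
             (complex_of_real (a + real (sum_list (tl n)) / 2 + (real r - 1) / 4) - \<i> * complex_of_real (\<xi> 0) / 2)
      * hypergeom
          [- complex_of_real (real (hd n)),
           complex_of_real (real (hd n) + 2 * (real (sum_list (tl n)) + mu + (real r - 1) / 2)),
           complex_of_real (a + real (sum_list (tl n)) / 2 + (real r - 1) / 4) + \<i> * complex_of_real (\<xi> 0) / 2]
          [complex_of_real (real (sum_list (tl n)) + 2 * a + (real r - 1) / 2),
           complex_of_real (real (sum_list (tl n)) + mu + real r / 2)] 1
      * fourier (r - 1) (f_fun (r - 1) (tl n) a mu) (\<lambda>i. \<xi> (Suc i))) \<and>
    (fourier r (f_fun r n a mu) \<xi> =
      complex_of_real (2 powr (2 * a - 1) * pochhammer (2 * mu) (last n) / fact (last n))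
      * Beta (complex_of_real a + \<i> * complex_of_real (\<xi> (r - 1)) / 2)
             (complex_of_real a - \<i> * complex_of_real (\<xi> (r - 1)) / 2)
      * hypergeom
          [- complex_of_real (real (last n)),
           complex_of_real (real (last n) + 2 * mu),
           complex_of_real a + \<i> * complex_of_real (\<xi> (r - 1)) / 2]
          [complex_of_real (2 * a), complex_of_real (mu + 1/2)] 1
      * fourier (r - 1) (f_fun (r - 1) (butlast n) (a + real (last n) / 2 + 1/4) (mu + real (last n) + 1/2)) \<xi>)"

proof -
  obtain s where rs: "r = Suc s" using assms(1) by (cases r) auto
  have a: "a > 0" using assms(3) .
  have nne: "n \<noteq> []" using assms(1,2) by auto
  define T where "T = (\<lambda>j. integral\<^sup>L lborel (G1d (bexp r n a j) (ball_lambda r mu n j) (n ! j) (\<xi> j)))"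
  have F: "fourier r (f_fun r n a mu) \<xi> = (\<Prod>j<r. T j)"
    unfolding T_def by (rule fourier_prod[OF a])
  have rm1: "r - 1 = s" using rs by simp
  have lt: "length (tl n) = s" "length (butlast n) = s" using assms(2) rs by auto
  have F1: "fourier (r - 1) (f_fun (r - 1) (tl n) a mu) (\<lambda>i. \<xi> (Suc i)) = (\<Prod>j<s. T (Suc j))"
  proof -
    have "fourier (r - 1) (f_fun (r - 1) (tl n) a mu) (\<lambda>i. \<xi> (Suc i)) =
      (\<Prod>j<s. integral\<^sup>L lborel (G1d (bexp s (tl n) a j) (ball_lambda s mu (tl n) j) (tl n ! j) (\<xi> (Suc j))))"
      unfolding rm1 by (rule fourier_prod[OF a])
    also have "\<dots> = (\<Prod>j<s. T (Suc j))"
    proof (rule prod.cong[OF refl])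
      fix j assume j: "j \<in> {..<s}"
      have nt: "tl n ! i = n ! Suc i" if "i < s" for i using that lt by (simp add: nth_tl)
      have sm: "(\<Sum>i\<in>{Suc j..<s}. tl n ! i) = (\<Sum>i\<in>{Suc (Suc j)..<r}. n ! i)"
        unfolding rs sum.shift_bounds_Suc_ivl by (intro sum.cong refl) (auto simp: nt)
      have "bexp s (tl n) a j = bexp r n a (Suc j)"
        unfolding bexp_def sm using rs by simp
      moreover have "ball_lambda s mu (tl n) j = ball_lambda r mu n (Suc j)"
        unfolding ball_lambda_def sm using rs by simp
      moreover have "tl n ! j = n ! Suc j" using j nt by simp
      ultimately show "integral\<^sup>L lborel (G1d (bexp s (tl n) a j) (ball_lambda s mu (tl n) j) (tl n ! j) (\<xi> (Suc j)))
          = T (Suc j)" unfolding T_def by simp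
    qed
    finally show ?thesis .
  qed
  define S where "S = real (sum_list (tl n))"
  have Ssum: "S = real (\<Sum>i\<in>{Suc 0..<r}. n ! i)"
  proof -
    have "sum_list (tl n) = (\<Sum>i=0..<s. tl n ! i)" using lt by (simp add: sum_list_sum_nth)
    also have "\<dots> = (\<Sum>i\<in>{Suc 0..<r}. n ! i)"
      unfolding rs sum.shift_bounds_Suc_ivl using lt by (intro sum.cong refl) (auto simp: nth_tl)
    finally show ?thesis by (simp add: S_def)
  qed
  have b0: "bexp r n a 0 = a + S / 2 + (real r - 1) / 4"
    unfolding bexp_def Ssum by simp
  have l0: "ball_lambda r mu n 0 = S + mu + (real r - 1) / 2"
    unfolding ball_lambda_def Ssum by simp
  have hd0: "n ! 0 = hd n" using nne by (simp add: hd_conv_nth)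
  have b0pos: "a + S / 2 + (real r - 1) / 4 > 0"
    using b0 bexp_pos[OF a, of 0 r n] rs by simp
  have T0: "T 0 = complex_of_real (2 powr (2 * (a + S / 2 + (real r - 1) / 4) - 1) *
          pochhammer (2 * (S + mu + (real r - 1) / 2)) (hd n) / fact (hd n))
      * Beta (complex_of_real (a + S / 2 + (real r - 1) / 4) + \<i> * complex_of_real (\<xi> 0) / 2)
             (complex_of_real (a + S / 2 + (real r - 1) / 4) - \<i> * complex_of_real (\<xi> 0) / 2)
      * hypergeom
          [- complex_of_real (real (hd n)),
           complex_of_real (real (hd n) + 2 * (S + mu + (real r - 1) / 2)),
           complex_of_real (a + S / 2 + (real r - 1) / 4) + \<i> * complex_of_real (\<xi> 0) / 2]
          [complex_of_real (2 * (a + S / 2 + (real r - 1) / 4)),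
           complex_of_real (S + mu + (real r - 1) / 2 + 1/2)] 1"
    unfolding T_def b0 l0 hd0 G1d_def by (rule T_integral(2)[OF b0pos])
  have e1: "2 * (a + S / 2 + (real r - 1) / 4) - 1 = S + 2 * a + (real r - 3) / 2" by (simp add: field_simps)
  have e2: "2 * (a + S / 2 + (real r - 1) / 4) = S + 2 * a + (real r - 1) / 2" by (simp add: field_simps)
  have e3: "S + mu + (real r - 1) / 2 + 1/2 = S + mu + real r / 2" by (simp add: field_simps)
  have P1: "fourier r (f_fun r n a mu) \<xi> = T 0 * (\<Prod>j<s. T (Suc j))"
  proof -
    have "(\<Prod>j<Suc s. T j) = T 0 * (\<Prod>j<s. T (Suc j))" by (rule prod.lessThan_Suc_shift)
    then show ?thesis using F rs by simp
  qed
  have conj1: "fourier r (f_fun r n a mu) \<xi> =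
      complex_of_real (2 powr (S + 2 * a + (real r - 3) / 2) *
          pochhammer (2 * (S + mu + (real r - 1) / 2)) (hd n) / fact (hd n))
      * Beta (complex_of_real (a + S / 2 + (real r - 1) / 4) + \<i> * complex_of_real (\<xi> 0) / 2)
             (complex_of_real (a + S / 2 + (real r - 1) / 4) - \<i> * complex_of_real (\<xi> 0) / 2)
      * hypergeom
          [- complex_of_real (real (hd n)),
           complex_of_real (real (hd n) + 2 * (S + mu + (real r - 1) / 2)),
           complex_of_real (a + S / 2 + (real r - 1) / 4) + \<i> * complex_of_real (\<xi> 0) / 2]
          [complex_of_real (S + 2 * a + (real r - 1) / 2),
           complex_of_real (S + mu + real r / 2)] 1
      * fourier (r - 1) (f_fun (r - 1) (tl n) a mu) (\<lambda>i. \<xi> (Suc i))"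
    unfolding P1 F1 using T0 unfolding e1 unfolding e2 e3 by (simp only:)
  define a' where "a' = a + real (last n) / 2 + 1/4"
  define mu' where "mu' = mu + real (last n) + 1/2"
  have a': "a' > 0" using a by (simp add: a'_def add_pos_nonneg)
  have lastn: "last n = n ! s" using nne assms(2) rs by (simp add: last_conv_nth)
  have F2: "fourier (r - 1) (f_fun (r - 1) (butlast n) a' mu') \<xi> = (\<Prod>j<s. T j)"
  proof -
    have "fourier (r - 1) (f_fun (r - 1) (butlast n) a' mu') \<xi> =
      (\<Prod>j<s. integral\<^sup>L lborel (G1d (bexp s (butlast n) a' j) (ball_lambda s mu' (butlast n) j) (butlast n ! j) (\<xi> j)))"
      unfolding rm1 by (rule fourier_prod[OF a'])
    also have "\<dots> = (\<Prod>j<s. T j)"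
    proof (rule prod.cong[OF refl])
      fix j assume j: "j \<in> {..<s}"
      have nb: "butlast n ! i = n ! i" if "i < s" for i using that lt by (simp add: nth_butlast)
      have sm: "(\<Sum>i\<in>{Suc j..<r}. n ! i) = (\<Sum>i\<in>{Suc j..<s}. butlast n ! i) + last n"
        using j unfolding rs lastn by (simp add: sum.atLeastLessThan_Suc nb)
      have "bexp s (butlast n) a' j = bexp r n a j"
        unfolding bexp_def sm a'_def using rs by (simp add: field_simps)
      moreover have "ball_lambda s mu' (butlast n) j = ball_lambda r mu n j"
        unfolding ball_lambda_def sm mu'_def using rs by (simp add: field_simps)
      moreover have "butlast n ! j = n ! j" using j nb by simp
      ultimately show "integral\<^sup>L lborel (G1d (bexp s (butlast n) a' j) (ball_lambda s mu' (butlast n) j) (butlast n ! j) (\<xi> j))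
          = T j" unfolding T_def by simp
    qed
    finally show ?thesis .
  qed
  have bl: "bexp r n a (r - 1) = a" unfolding bexp_def using rs by simp
  have ll: "ball_lambda r mu n (r - 1) = mu" unfolding ball_lambda_def using rs by simp
  have nl: "n ! (r - 1) = last n" using lastn rs by simp
  have Tl: "T (r - 1) = complex_of_real (2 powr (2 * a - 1) * pochhammer (2 * mu) (last n) / fact (last n))
      * Beta (complex_of_real a + \<i> * complex_of_real (\<xi> (r - 1)) / 2)
             (complex_of_real a - \<i> * complex_of_real (\<xi> (r - 1)) / 2)
      * hypergeom
          [- complex_of_real (real (last n)),
           complex_of_real (real (last n) + 2 * mu),
           complex_of_real a + \<i> * complex_of_real (\<xi> (r - 1)) / 2]
          [complex_of_real (2 * a), complex_of_real (mu + 1/2)] 1"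
    unfolding T_def bl ll nl G1d_def by (rule T_integral(2)[OF a])
  have P2: "fourier r (f_fun r n a mu) \<xi> = (\<Prod>j<s. T j) * T (r - 1)"
  proof -
    have "(\<Prod>j<Suc s. T j) = (\<Prod>j<s. T j) * T s" by simp
    then show ?thesis using F rs by simp
  qed
  have conj2: "fourier r (f_fun r n a mu) \<xi> =
      complex_of_real (2 powr (2 * a - 1) * pochhammer (2 * mu) (last n) / fact (last n))
      * Beta (complex_of_real a + \<i> * complex_of_real (\<xi> (r - 1)) / 2)
             (complex_of_real a - \<i> * complex_of_real (\<xi> (r - 1)) / 2)
      * hypergeom
          [- complex_of_real (real (last n)),
           complex_of_real (real (last n) + 2 * mu),
           complex_of_real a + \<i> * complex_of_real (\<xi> (r - 1)) / 2]
          [complex_of_real (2 * a), complex_of_real (mu + 1/2)] 1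
      * fourier (r - 1) (f_fun (r - 1) (butlast n) (a + real (last n) / 2 + 1/4) (mu + real (last n) + 1/2)) \<xi>"
    unfolding P2 using F2 Tl unfolding a'_def mu'_def by (simp add: mult_ac)
  show ?thesis using conj1 conj2 unfolding S_def by blast
qed

end
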